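(* Suppose $\mathit{Act}=\{a\}$. Then the finite axiom system $\mathcal{E}_{v,1}'=\mathcal{E}_v'\cup\{V_1\}$, where ($V_1$) is $x=x+a.x$, is complete for $\simeq$ over open monitors: for all monitors $m,n$, if $m\simeq n$ then $\mathcal{E}_{v,1}'\vdash m=n$. Hence verdict equivalence has a finite equational basis when $\mathit{Act}=\{a\}$.
   Context: Monitors: terms $m,n ::= v \mid a.m \mid m+n \mid x$ over the action set $\mathit{Act}$ and variables $x$, verdicts $v::=\mathit{end}\mid\mathit{yes}\mid\mathit{no}$. Semantics: $\xrightarrow{\alpha}$ ($\alpha\in\mathit{Act}\cup\{\tau\}$) is the least relation with $a.m\xrightarrow{a}m$; $m\xrightarrow{\alpha}m'$ implies $m+n\xrightarrow{\alpha}m'$ and $n+m\xrightarrow{\alpha}m'$; $v\xrightarrow{\alpha}v$ for verdicts $v$. Weak transitions: $m\xRightarrow{\varepsilon}m'$ iff $m(\xrightarrow{\tau})^*m'$; $m\xRightarrow{a}m'$ iff $m\xRightarrow{\varepsilon}\xrightarrow{a}\xRightarrow{\varepsilon}m'$; $m\xRightarrow{as'}m'$ ($s'\ne\varepsilon$) iff $m\xRightarrow{a}m_1\xRightarrow{s'}m'$. For closed $m$, $L_a(m)=\{s\mid m\xRightarrow{s}\mathit{yes}\}$, $L_r(m)=\{s\mid m\xRightarrow{s}\mathit{no}\}$; $m\simeq n$ iff $L_a,L_r$ coincide for closed terms, and iff $\sigma(m)\simeq\sigma(n)$ for all closed substitutions $\sigma$ for open terms. $\mathcal{E}\vdash m=n$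 denotes derivability by reflexivity, symmetry, transitivity, substitution and congruence for $a.\_$ and $+$. $\mathcal{E}_v'$ consists of (A1) $x+y=y+x$; (A2) $x+(y+z)=(x+y)+z$; (A3) $x+x=x$; (A4) $x+\mathit{end}=x$; for each $a\in\mathit{Act}$: ($E_a$) $a.\mathit{end}=\mathit{end}$; ($Y_a$) $\mathit{yes}=\mathit{yes}+a.\mathit{yes}$; ($N_a$) $\mathit{no}=\mathit{no}+a.\mathit{no}$; ($D_a$) $a.(x+y)=a.x+a.y$; and (O1) $\mathit{yes}+\mathit{no}=\mathit{yes}+\mathit{no}+x$. *)

theory Defs
  imports Main
begin

datatype verdict = End | Yes | No

datatype 'a mon =
    Verd verdict
  | Pre 'a "'a mon"
  | Plus "'a mon" "'a mon"
  | Var nat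

datatype 'a lab = Act 'a | Tau

inductive step :: "'a mon \<Rightarrow> 'a lab \<Rightarrow> 'a mon \<Rightarrow> bool" where
  pre:   "step (Pre a m) (Act a) m"
| suml:  "step m \<alpha> m' \<Longrightarrow> step (Plus m n) \<alpha> m'"
| sumr:  "step m \<alpha> m' \<Longrightarrow> step (Plus n m) \<alpha> m'"
| verd:  "step (Verd v) \<alpha> (Verd v)"

definition tau_star :: "'a mon \<Rightarrow> 'a mon \<Rightarrow> bool" where
  "tau_star = (\<lambda>m m'. step m Tau m')\<^sup>*\<^sup>*"

fun weak :: "'a mon \<Rightarrow> 'a list \<Rightarrow> 'a mon \<Rightarrow> bool" where
  "weak m [] m' = tau_star m m'"
| "weak m (a # s) m' =
     (\<exists>m1 m2 m3. tau_star m m1 \<and> step m1 (Act a) m2 \<and> tau_star m2 m3 \<and> weak m3 s m')"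

definition Lacc :: "'a mon \<Rightarrow> 'a list set" where
  "Lacc m = {s. weak m s (Verd Yes)}"

definition Lrej :: "'a mon \<Rightarrow> 'a list set" where
  "Lrej m = {s. weak m s (Verd No)}"

fun vars :: "'a mon \<Rightarrow> nat set" where
  "vars (Verd v) = {}"
| "vars (Pre a m) = vars m"
| "vars (Plus m n) = vars m \<union> vars n"
| "vars (Var x) = {x}"

definition closed :: "'a mon \<Rightarrow> bool" where
  "closed m \<longleftrightarrow> vars m = {}"

fun subst :: "(nat \<Rightarrow> 'a mon) \<Rightarrow> 'a mon \<Rightarrow> 'a mon" where
  "subst \<sigma> (Verd v) = Verd v"
| "subst \<sigma> (Pre a m) = Pre a (subst \<sigma> m)"
| "subst \<sigma> (Plus m n) = Plus (subst \<sigma> m) (subst \<sigma> n)"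
| "subst \<sigma> (Var x) = \<sigma> x"

definition closed_equiv :: "'a mon \<Rightarrow> 'a mon \<Rightarrow> bool" where
  "closed_equiv m n \<longleftrightarrow> Lacc m = Lacc n \<and> Lrej m = Lrej n"

definition mon_equiv :: "'a mon \<Rightarrow> 'a mon \<Rightarrow> bool" where
  "mon_equiv m n \<longleftrightarrow>
     (\<forall>\<sigma>. (\<forall>x. closed (\<sigma> x)) \<longrightarrow> closed_equiv (subst \<sigma> m) (subst \<sigma> n))"

inductive derivable :: "('a mon \<times> 'a mon) set \<Rightarrow> 'a mon \<Rightarrow> 'a mon \<Rightarrow> bool"
  for E where
  ax:    "(l, r) \<in> E \<Longrightarrow> derivable E l r"
| refl:  "derivable E m m"
| sym:   "derivable E m n \<Longrightarrow> derivable E n m"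
| trans: "derivable E m n \<Longrightarrow> derivable E n k \<Longrightarrow> derivable E m k"
| subst: "derivable E m n \<Longrightarrow> derivable E (subst \<sigma> m) (subst \<sigma> n)"
| cpre:  "derivable E m n \<Longrightarrow> derivable E (Pre a m) (Pre a n)"
| cplus: "derivable E m n \<Longrightarrow> derivable E m' n' \<Longrightarrow> derivable E (Plus m m') (Plus n n')"

abbreviation "vx \<equiv> Var 0"
abbreviation "vy \<equiv> Var 1"
abbreviation "vz \<equiv> Var 2"

definition Ev' :: "('a mon \<times> 'a mon) set" where
  "Ev' =
     {(Plus vx vy, Plus vy vx),
      (Plus vx (Plus vy vz), Plus (Plus vx vy) vz),
      (Plus vx vx, vx),
      (Plus vx (Verd End), vx),
      (Plus (Verd Yes) (Verd No), Plus (Plus (Verd Yes) (Verd No)) vx)}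
   \<union> (\<Union>a. {(Pre a (Verd End), Verd End),
             (Verd Yes, Plus (Verd Yes) (Pre a (Verd Yes))),
             (Verd No, Plus (Verd No) (Pre a (Verd No))),
             (Pre a (Plus vx vy), Plus (Pre a vx) (Pre a vy))})"

definition Ev1' :: "'a \<Rightarrow> ('a mon \<times> 'a mon) set" where
  "Ev1' a = Ev' \<union> {(vx, Plus vx (Pre a vx))}"

end

theory Submission
  imports Defs
begin

inductive occ :: "'a mon \<Rightarrow> nat \<Rightarrow> 'a mon \<Rightarrow> bool" where
  ov: "occ (Verd v) 0 (Verd v)"
| ox: "occ (Var x) 0 (Var x)"
| op: "occ m d u \<Longrightarrow> occ (Pre b m) (Suc d) u"
| oL: "occ m d u \<Longrightarrow> occ (Plus m n) d u"
| oR: "occ n d u \<Longrightarrow> occ (Plus m n) d u"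

inductive_cases occ_VerdE: "occ (Verd w) d u"
inductive_cases occ_VarE: "occ (Var x) d u"
inductive_cases occ_PreE: "occ (Pre b m) d u"
inductive_cases occ_PlusE: "occ (Plus m n) d u"

definition sig :: "'a mon \<Rightarrow> 'a mon \<Rightarrow> 'a mon \<Rightarrow> nat \<Rightarrow> 'a mon" where
  "sig p q r = (\<lambda>i. if i = 0 then p else if i = 1 then q else r)"

abbreviation der where "der a \<equiv> derivable (Ev1' a)"

lemma ax_inst: "(l, r) \<in> Ev1' a \<Longrightarrow> der a (subst \<sigma> l) (subst \<sigma> r)"
  by (rule derivable.subst, rule derivable.ax)

lemma comm: "der a (Plus p q) (Plus q p)"
  using ax_inst[of "Plus vx vy" "Plus vy vx" a "sig p q q"]
  by (simp add: sig_def Ev1'_def Ev'_def)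

lemma assoc: "der a (Plus p (Plus q r)) (Plus (Plus p q) r)"
  using ax_inst[of "Plus vx (Plus vy vz)" "Plus (Plus vx vy) vz" a "sig p q r"]
  by (simp add: sig_def Ev1'_def Ev'_def)

lemma idem: "der a (Plus p p) p"
  using ax_inst[of "Plus vx vx" "vx" a "sig p p p"]
  by (simp add: sig_def Ev1'_def Ev'_def)

lemma endr: "der a (Plus p (Verd End)) p"
  using ax_inst[of "Plus vx (Verd End)" "vx" a "sig p p p"]
  by (simp add: sig_def Ev1'_def Ev'_def)

lemma O1: "der a (Plus (Verd Yes) (Verd No)) (Plus (Plus (Verd Yes) (Verd No)) p)"
  using ax_inst[of "Plus (Verd Yes) (Verd No)" "Plus (Plus (Verd Yes) (Verd No)) vx" a "sig p p p"]
  by (simp add: sig_def Ev1'_def Ev'_def)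

lemma Eend: "der a (Pre a (Verd End)) (Verd End)"
  using ax_inst[of "Pre a (Verd End)" "Verd End" a "sig (Verd End) (Verd End) (Verd End)"]
  by (simp add: sig_def Ev1'_def Ev'_def)

lemma Dist: "der a (Pre a (Plus p q)) (Plus (Pre a p) (Pre a q))"
  using ax_inst[of "Pre a (Plus vx vy)" "Plus (Pre a vx) (Pre a vy)" a "sig p q q"]
  by (simp add: sig_def Ev1'_def Ev'_def)

lemma V1: "der a p (Plus p (Pre a p))"
  using ax_inst[of "vx" "Plus vx (Pre a vx)" a "sig p p p"]
  by (simp add: sig_def Ev1'_def Ev'_def)

definition absorbs where "absorbs a m t \<longleftrightarrow> der a m (Plus m t)"

definition pres where "pres a k t = (Pre a ^^ k) t"

lemma abs_plus: "absorbs a m t1 \<Longrightarrow> absorbs a m t2 \<Longrightarrow> absorbs a m (Plus t1 t2)"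
  unfolding absorbs_def
  by (meson derivable.trans derivable.cplus derivable.refl derivable.sym assoc)

lemma abs_end: "absorbs a m (Verd End)"
  unfolding absorbs_def by (meson derivable.sym endr)

lemma abs_self: "absorbs a m m"
  unfolding absorbs_def by (meson derivable.sym idem)

lemma abs_trans: "absorbs a m s \<Longrightarrow> absorbs a s t \<Longrightarrow> absorbs a m t"
  unfolding absorbs_def
proof -
  assume h1: "der a m (Plus m s)" and h2: "der a s (Plus s t)"
  have "der a m (Plus m (Plus s t))"
    by (meson h1 h2 derivable.trans derivable.cplus derivable.refl)
  moreover have "der a (Plus m (Plus s t)) (Plus (Plus m s) t)" by (rule assoc)
  moreover have "der a (Plus (Plus m s) t) (Plus m t)"
    by (meson h1 derivable.cplus derivable.refl derivable.sym)
  ultimately show "der a m (Plus m t)" by (meson derivable.trans)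
qed

lemma abs_eq: "der a m m' \<Longrightarrow> absorbs a m t \<Longrightarrow> absorbs a m' t"
  unfolding absorbs_def
  by (meson derivable.trans derivable.cplus derivable.refl derivable.sym)

lemma abs_eqR: "der a t t' \<Longrightarrow> absorbs a m t' \<Longrightarrow> absorbs a m t"
  unfolding absorbs_def
  by (meson derivable.trans derivable.cplus derivable.refl derivable.sym)

lemma abs_plusL: "absorbs a m t \<Longrightarrow> absorbs a (Plus m n) t"
  unfolding absorbs_def
proof -
  assume h: "der a m (Plus m t)"
  have "der a (Plus m n) (Plus (Plus m t) n)" by (meson h derivable.cplus derivable.refl)
  moreover have "der a (Plus (Plus m t) n) (Plus m (Plus t n))" by (meson assoc derivable.sym)
  moreover have "der a (Plus m (Plus t n)) (Plus m (Plus n t))" by (meson comm derivable.cplus derivable.refl)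
  moreover have "der a (Plus m (Plus n t)) (Plus (Plus m n) t)" by (rule assoc)
  ultimately show "der a (Plus m n) (Plus (Plus m n) t)" by (meson derivable.trans)
qed

lemma abs_plusR: "absorbs a n t \<Longrightarrow> absorbs a (Plus m n) t"
  by (meson abs_eq abs_plusL comm)

lemma abs_pre: "absorbs a m t \<Longrightarrow> absorbs a (Pre a m) (Pre a t)"
  unfolding absorbs_def by (meson Dist derivable.cpre derivable.trans)

lemma pres_Suc: "pres a (Suc k) t = Pre a (pres a k t)"
  by (simp add: pres_def)

lemma pres_0: "pres a 0 t = t"
  by (simp add: pres_def)

lemma abs_pres: "absorbs a m t \<Longrightarrow> absorbs a (pres a k m) (pres a k t)"
proof (induction k)
  case 0 then show ?case by (simp only: pres_0)
next
  case (Suc k) then have "absorbs a (pres a k m) (pres a k t)" by blast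
  then show ?case unfolding pres_Suc by (rule abs_pre)
qed

lemma pres_plus: "der a (pres a k (Plus p q)) (Plus (pres a k p) (pres a k q))"
proof (induction k)
  case 0 then show ?case unfolding pres_0 by (rule derivable.refl)
next
  case (Suc k)
  show ?case unfolding pres_Suc by (rule derivable.trans[OF derivable.cpre[OF Suc.IH] Dist])
qed

lemma pres_end: "der a (pres a k (Verd End)) (Verd End)"
proof (induction k)
  case 0 then show ?case unfolding pres_0 by (rule derivable.refl)
next
  case (Suc k)
  show ?case unfolding pres_Suc by (rule derivable.trans[OF derivable.cpre[OF Suc.IH] Eend])
qed

lemma abs_V: "absorbs a t (pres a j t)"
proof (induction j)
  case 0 show ?case unfolding pres_0 by (rule abs_self)
next
  case (Suc j)
  have "absorbs a t (Pre a t)" unfolding absorbs_def by (rule V1)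
  moreover have "absorbs a (Pre a t) (Pre a (pres a j t))" using Suc by (rule abs_pre)
  ultimately show ?case unfolding pres_Suc by (rule abs_trans)
qed

lemma abs_mono: "k \<le> j \<Longrightarrow> absorbs a (pres a k u) (pres a j u)"
proof -
  assume "k \<le> j"
  then obtain i where "j = k + i" using le_Suc_ex by blast
  then have "pres a j u = pres a k (pres a i u)"
    by (simp add: pres_def funpow_add)
  moreover have "absorbs a (pres a k u) (pres a k (pres a i u))" by (rule abs_pres[OF abs_V])
  ultimately show ?thesis by simp
qed

lemma occ_abs: "occ m d u \<Longrightarrow> UNIV = {a} \<Longrightarrow> absorbs a m (pres a d u)"
proof (induction rule: occ.induct)
  case (ov v) show ?case unfolding pres_0 by (rule abs_self)
next
  case (ox x) show ?case unfolding pres_0 by (rule abs_self)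
next
  case (op m d u b)
  have "b = a" using op.prems by (metis UNIV_I singletonD)
  have "absorbs a m (pres a d u)" using op.IH[OF op.prems] .
  then show ?case unfolding pres_Suc \<open>b = a\<close> by (rule abs_pre)
next
  case (oL m d u n) show ?case by (rule abs_plusL[OF oL.IH[OF oL.prems]])
next
  case (oR n d u m) show ?case by (rule abs_plusR[OF oR.IH[OF oR.prems]])
qed

definition good where
  "good m j u \<longleftrightarrow> u = Verd End \<or> (\<exists>d\<le>j. occ m d u) \<or>
     (\<exists>d1 d2. d1 \<le> j \<and> d2 \<le> j \<and> occ m d1 (Verd Yes) \<and> occ m d2 (Verd No))"

lemma occ_abs_le: "occ m d u \<Longrightarrow> d \<le> k \<Longrightarrow> UNIV = {a} \<Longrightarrow> absorbs a m (pres a k u)"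
  by (rule abs_trans[OF occ_abs abs_mono])

lemma good_abs: "good m k u \<Longrightarrow> UNIV = {a} \<Longrightarrow> absorbs a m (pres a k u)"
proof -
  assume g: "good m k u" and U: "UNIV = {a}"
  have "u = Verd End \<or> (\<exists>d\<le>k. occ m d u) \<or>
     (\<exists>d1 d2. d1 \<le> k \<and> d2 \<le> k \<and> occ m d1 (Verd Yes) \<and> occ m d2 (Verd No))"
    using g by (simp only: good_def)
  then show ?thesis
  proof (elim disjE)
    assume 1: "u = Verd End"
    show ?thesis unfolding 1 by (rule abs_eqR[OF pres_end abs_end])
  next
    assume "\<exists>d\<le>k. occ m d u"
    then obtain d where d: "d \<le> k" "occ m d u" by blast
    show ?thesis by (rule occ_abs_le[OF d(2) d(1) U])
  next
    assume "\<exists>d1 d2. d1 \<le> k \<and> d2 \<le> k \<and> occ m d1 (Verd Yes) \<and> occ m d2 (Verd No)"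
    then obtain d1 d2 where d: "d1 \<le> k" "d2 \<le> k" "occ m d1 (Verd Yes)" "occ m d2 (Verd No)" by blast
    have "absorbs a m (pres a k (Verd Yes))" by (rule occ_abs_le[OF d(3) d(1) U])
    moreover have "absorbs a m (pres a k (Verd No))" by (rule occ_abs_le[OF d(4) d(2) U])
    ultimately have "absorbs a m (Plus (pres a k (Verd Yes)) (pres a k (Verd No)))" by (rule abs_plus)
    then have "absorbs a m (pres a k (Plus (Verd Yes) (Verd No)))" by (rule abs_eqR[OF pres_plus])
    moreover have "absorbs a (pres a k (Plus (Verd Yes) (Verd No))) (pres a k u)"
      by (rule abs_pres) (unfold absorbs_def, rule O1)
    ultimately show ?thesis by (rule abs_trans)
  qed
qed

lemma gen_abs: "UNIV = {a} \<Longrightarrow> (\<And>d u. occ n d u \<Longrightarrow> good m (k + d) u) \<Longrightarrow> absorbs a m (pres a k n)"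
proof (induction n arbitrary: k)
  case (Verd v)
  have "good m (k + 0) (Verd v)" by (rule Verd.prems(2)[OF occ.ov])
  then show ?case using good_abs[OF _ Verd.prems(1)] by simp
next
  case (Var x)
  have "good m (k + 0) (Var x)" by (rule Var.prems(2)[OF occ.ox])
  then show ?case using good_abs[OF _ Var.prems(1)] by simp
next
  case (Pre b n)
  have "b = a" using Pre.prems(1) by (metis UNIV_I singletonD)
  have "pres a k (Pre b n) = pres a (Suc k) n"
    unfolding pres_def \<open>b = a\<close> by (simp add: funpow_swap1)
  moreover have "absorbs a m (pres a (Suc k) n)"
  proof (rule Pre.IH[OF Pre.prems(1)])
    fix d u assume "occ n d u"
    then have "occ (Pre b n) (Suc d) u" by (rule occ.op)
    then have "good m (k + Suc d) u" by (rule Pre.prems(2))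
    then show "good m (Suc k + d) u" by simp
  qed
  ultimately show ?case by simp
next
  case (Plus n1 n2)
  have "absorbs a m (pres a k n1)"
  proof (rule Plus.IH(1)[OF Plus.prems(1)])
    fix d u assume "occ n1 d u" then show "good m (k + d) u" by (rule Plus.prems(2)[OF occ.oL])
  qed
  moreover have "absorbs a m (pres a k n2)"
  proof (rule Plus.IH(2)[OF Plus.prems(1)])
    fix d u assume "occ n2 d u" then show "good m (k + d) u" by (rule Plus.prems(2)[OF occ.oR])
  qed
  ultimately have "absorbs a m (Plus (pres a k n1) (pres a k n2))" by (rule abs_plus)
  then show ?case by (rule abs_eqR[OF pres_plus])
qed

lemma step_tau: "step t l t' \<Longrightarrow> l = Tau \<Longrightarrow> \<exists>w. t' = Verd w \<and> occ t 0 (Verd w)"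
  by (induction rule: step.induct) (auto intro: occ.intros)

lemma occ_back_tau: "step t Tau t' \<Longrightarrow> occ t' d u \<Longrightarrow> occ t d u"
  using step_tau by (fastforce elim: occ_VerdE)

lemma tau_back: "tau_star t t' \<Longrightarrow> occ t' d u \<Longrightarrow> occ t d u"
  unfolding tau_star_def
  by (induction rule: converse_rtranclp_induct) (auto intro: occ_back_tau)

lemma step_back: "step t l t' \<Longrightarrow> occ t' d u \<Longrightarrow> \<exists>d'\<le>Suc d. occ t d' u"
  by (induction arbitrary: d rule: step.induct) (auto intro: occ.intros elim: occ_VerdE)

lemma weak_back: "weak t s (Verd v) \<Longrightarrow> \<exists>d\<le>length s. occ t d (Verd v)"
proof (induction s arbitrary: t)
  case Nil then show ?case using tau_back occ.ov by fastforce
next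
  case (Cons b s)
  then obtain m1 m2 m3 where h: "tau_star t m1" "step m1 (Act b) m2" "tau_star m2 m3" "weak m3 s (Verd v)"
    by auto
  then obtain d where "d \<le> length s" "occ m3 d (Verd v)" using Cons.IH by blast
  then have "occ m2 d (Verd v)" using tau_back h by blast
  then obtain d' where "d' \<le> Suc d" "occ m1 d' (Verd v)" using step_back h by blast
  then have "occ t d' (Verd v)" using tau_back h by blast
  moreover have "d' \<le> length (b # s)" using \<open>d' \<le> Suc d\<close> \<open>d \<le> length s\<close> by simp
  ultimately show ?case by blast
qed

lemma occ_step0: "occ t d u \<Longrightarrow> d = 0 \<Longrightarrow> u = Verd v \<Longrightarrow> step t l (Verd v)"
  by (induction rule: occ.induct) (auto intro: step.intros)

lemma occ_stepS: "occ t d u \<Longrightarrow> d = Suc d' \<Longrightarrow> \<exists>b t''. step t (Act b) t'' \<and> occ t'' d' u"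
  by (induction arbitrary: d' rule: occ.induct) (auto intro: step.intros)

lemma tau1: "step t Tau t' \<Longrightarrow> tau_star t t'"
  unfolding tau_star_def by auto

lemma taurefl: "tau_star t t"
  unfolding tau_star_def by auto

lemma weak_verd: "weak (Verd v) s (Verd v)"
  by (induction s) (auto intro: taurefl step.verd)

lemma weak_fwd: "(UNIV :: 'a set) = {a} \<Longrightarrow> occ (t :: 'a mon) d (Verd v) \<Longrightarrow> d \<le> length s \<Longrightarrow> weak t s (Verd v)"
proof (induction d arbitrary: t s)
  case 0
  have st: "\<And>l. step t l (Verd v)" using occ_step0[OF 0(2)] by blast
  show ?case
  proof (cases s)
    case Nil then show ?thesis using tau1[OF st] by simp
  next
    case (Cons c s')
    have "tau_star t (Verd v)" using st tau1 by blast
    moreover have "step (Verd v) (Act c) (Verd v)" by (rule step.verd)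
    moreover have "weak (Verd v) s' (Verd v)" by (rule weak_verd)
    ultimately show ?thesis unfolding Cons using taurefl by (simp only: weak.simps) blast
  qed
next
  case (Suc d)
  obtain c s' where s: "s = c # s'" using Suc.prems(3) by (cases s) auto
  obtain b t'' where bt: "step t (Act b) t''" "occ t'' d (Verd v)" using occ_stepS Suc.prems(2) by blast
  have "b = c" using Suc.prems(1) by (metis UNIV_I singletonD)
  have "d \<le> length s'" using Suc.prems(3) s by simp
  then have w: "weak t'' s' (Verd v)" using Suc.IH[OF Suc.prems(1) bt(2)] by blast
  show ?case unfolding s using taurefl bt(1) w \<open>b = c\<close> by (simp only: weak.simps) blast
qed

lemma Lacc_char: "(UNIV :: 'a set) = {a} \<Longrightarrow> s \<in> Lacc (t :: 'a mon) \<longleftrightarrow> (\<exists>d\<le>length s. occ t d (Verd Yes))"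
proof -
  assume U: "(UNIV :: 'a set) = {a}"
  show ?thesis unfolding Lacc_def mem_Collect_eq
  proof
    assume "weak t s (Verd Yes)" then show "\<exists>d\<le>length s. occ t d (Verd Yes)" by (rule weak_back)
  next
    assume "\<exists>d\<le>length s. occ t d (Verd Yes)"
    then obtain d where "d \<le> length s" "occ t d (Verd Yes)" by blast
    then show "weak t s (Verd Yes)" using weak_fwd[OF U] by blast
  qed
qed

lemma Lrej_char: "(UNIV :: 'a set) = {a} \<Longrightarrow> s \<in> Lrej (t :: 'a mon) \<longleftrightarrow> (\<exists>d\<le>length s. occ t d (Verd No))"
proof -
  assume U: "(UNIV :: 'a set) = {a}"
  show ?thesis unfolding Lrej_def mem_Collect_eq
  proof
    assume "weak t s (Verd No)" then show "\<exists>d\<le>length s. occ t d (Verd No)" by (rule weak_back)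
  next
    assume "\<exists>d\<le>length s. occ t d (Verd No)"
    then obtain d where "d \<le> length s" "occ t d (Verd No)" by blast
    then show "weak t s (Verd No)" using weak_fwd[OF U] by blast
  qed
qed

lemma occ_subst1: "occ t d1 w \<Longrightarrow> occ (subst \<sigma> w) d2 u \<Longrightarrow> occ (subst \<sigma> t) (d1 + d2) u"
  by (induction rule: occ.induct) (auto intro: occ.intros)

lemma occ_subst2: "occ (subst \<sigma> t) d u \<Longrightarrow>
   occ t d u \<or> (\<exists>x d1 d2. occ t d1 (Var x) \<and> occ (\<sigma> x) d2 u \<and> d = d1 + d2)"
proof (induction t arbitrary: d)
  case (Verd v) then show ?case by simp
next
  case (Var x) then show ?case using occ.ox by fastforce
next
  case (Pre b t)
  then obtain d' where "d = Suc d'" "occ (subst \<sigma> t) d' u" by (auto elim: occ_PreE)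
  from Pre.IH[OF this(2)] show ?case
  proof
    assume "occ t d' u" then have "occ (Pre b t) d u" using \<open>d = Suc d'\<close> occ.op by simp
    then show ?case by blast
  next
    assume "\<exists>x d1 d2. occ t d1 (Var x) \<and> occ (\<sigma> x) d2 u \<and> d' = d1 + d2"
    then obtain x d1 d2 where "occ t d1 (Var x)" "occ (\<sigma> x) d2 u" "d' = d1 + d2" by blast
    then have "occ (Pre b t) (Suc d1) (Var x)" "d = Suc d1 + d2" using \<open>d = Suc d'\<close> occ.op by auto
    then show ?case using \<open>occ (\<sigma> x) d2 u\<close> by blast
  qed
next
  case (Plus t1 t2)
  then have "occ (subst \<sigma> t1) d u \<or> occ (subst \<sigma> t2) d u" by (auto elim: occ_PlusE)
  with Plus.IH show ?case by (meson occ.oL occ.oR)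
qed

lemma occ_verd_iff: "occ (Verd w) d u \<longleftrightarrow> d = 0 \<and> u = Verd w"
  by (auto elim: occ_VerdE intro: occ.ov)

definition sg where "sg x v = (\<lambda>y. if y = x then Verd v else Verd End)"

lemma sg_closed: "closed (sg x v y)"
  by (simp add: sg_def closed_def)

lemma key:
  assumes U: "(UNIV :: 'a set) = {a}" and eq: "mon_equiv m (n :: 'a mon)" and v: "v = Yes \<or> v = No"
    and o: "occ n d u" and uv: "u = Verd v \<or> (\<exists>x. u = Var x)"
  shows "\<exists>d'\<le>d. occ m d' (Verd v) \<or> occ m d' u"
proof -
  define x where "x = (case u of Var y \<Rightarrow> y | _ \<Rightarrow> 0)"
  define \<sigma> :: "nat \<Rightarrow> 'a mon" where "\<sigma> = (if u = Verd v then sg x End else sg x v)"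
  have cl: "\<forall>y. closed (\<sigma> y)" by (simp add: \<sigma>_def sg_closed)
  have "occ (subst \<sigma> u) 0 (Verd v)"
    using uv by (auto simp: \<sigma>_def sg_def x_def intro: occ.ov)
  then have "occ (subst \<sigma> n) d (Verd v)" using occ_subst1[OF o] by fastforce
  then have "replicate d a \<in> (if v = Yes then Lacc (subst \<sigma> n) else Lrej (subst \<sigma> n))"
    using v Lacc_char[OF U] Lrej_char[OF U] by auto
  then have "replicate d a \<in> (if v = Yes then Lacc (subst \<sigma> m) else Lrej (subst \<sigma> m))"
    using eq cl unfolding mon_equiv_def closed_equiv_def by auto
  then obtain d' where d': "d' \<le> d" "occ (subst \<sigma> m) d' (Verd v)"
    using v Lacc_char[OF U] Lrej_char[OF U] by (auto split: if_splits)
  from occ_subst2[OF d'(2)] show ?thesis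
  proof
    assume "occ m d' (Verd v)" then show ?thesis using d' by blast
  next
    assume "\<exists>y d1 d2. occ m d1 (Var y) \<and> occ (\<sigma> y) d2 (Verd v) \<and> d' = d1 + d2"
    then obtain y d1 d2 where h: "occ m d1 (Var y)" "occ (\<sigma> y) d2 (Verd v)" "d' = d1 + d2" by blast
    then have "y = x \<and> d2 = 0 \<and> u \<noteq> Verd v" using v
      by (auto simp: \<sigma>_def sg_def occ_verd_iff split: if_splits)
    then have "u = Var y" using uv x_def by auto
    moreover have "d1 \<le> d" using h d' by simp
    ultimately show ?thesis using h(1) by blast
  qed
qed

lemma sem_good:
  assumes U: "(UNIV :: 'a set) = {a}" and eq: "mon_equiv m (n :: 'a mon)" and o: "occ n d u"
  shows "good m d u"
proof -
  have ua: "(\<exists>w. u = Verd w) \<or> (\<exists>x. u = Var x)"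
    using o by (induction rule: occ.induct) auto
  show ?thesis
  proof (cases "\<exists>x. u = Var x")
    case True
    obtain d1 where d1: "d1 \<le> d" "occ m d1 (Verd Yes) \<or> occ m d1 u"
      using key[OF U eq _ o, of Yes] True by blast
    obtain d2 where d2: "d2 \<le> d" "occ m d2 (Verd No) \<or> occ m d2 u"
      using key[OF U eq _ o, of No] True by blast
    show ?thesis
    proof (cases "occ m d1 u \<or> occ m d2 u")
      case True
      then show ?thesis using d1(1) d2(1) unfolding good_def by blast
    next
      case False
      then have "occ m d1 (Verd Yes)" "occ m d2 (Verd No)" using d1 d2 by auto
      then show ?thesis using d1(1) d2(1) unfolding good_def by blast
    qed
  next
    case False
    then obtain w where w: "u = Verd w" using ua by blast
    show ?thesis
    proof (cases w)
      case End then show ?thesis using w by (simp add: good_def)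
    next
      case Yes
      obtain d' where "d' \<le> d" "occ m d' (Verd Yes) \<or> occ m d' u"
        using key[OF U eq _ o, of Yes] w Yes by blast
      then show ?thesis using w Yes unfolding good_def by auto
    next
      case No
      obtain d' where "d' \<le> d" "occ m d' (Verd No) \<or> occ m d' u"
        using key[OF U eq _ o, of No] w No by blast
      then show ?thesis using w No unfolding good_def by auto
    qed
  qed
qed

lemma mon_equiv_sym: "mon_equiv m n \<Longrightarrow> mon_equiv n m"
  unfolding mon_equiv_def closed_equiv_def by auto

theorem mainTheorem16:
  fixes a :: 'a and m n :: "'a mon"
  assumes "(UNIV :: 'a set) = {a}"
    and "mon_equiv m n"
  shows "derivable (Ev1' a) m n"
proof -
  have "absorbs a m (pres a 0 n)"
  proof (rule gen_abs[OF assms(1)])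
    fix d u assume "occ n d u"
    then show "good m (0 + d) u" using sem_good[OF assms] by simp
  qed
  then have h1: "der a m (Plus m n)" by (simp add: pres_def absorbs_def)
  have "absorbs a n (pres a 0 m)"
  proof (rule gen_abs[OF assms(1)])
    fix d u assume "occ m d u"
    then show "good n (0 + d) u" using sem_good[OF assms(1) mon_equiv_sym[OF assms(2)]] by simp
  qed
  then have h2: "der a n (Plus n m)" by (simp add: pres_def absorbs_def)
  show ?thesis by (rule derivable.trans[OF h1 derivable.trans[OF comm derivable.sym[OF h2]]])
qed

end
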